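(* Let $a,b$ be positive integers with $a > b > 0$, $\gcd(a,b)=1$ and $a \not\equiv b \pmod 2$, and put $$N_{1,7} = (a+b)^2 - 2b^2,\qquad N_{1,5} = a^2+b^2,\qquad N_{1,3} = (a-b)^2+2b^2 .$$ Then $N_{1,3}, N_{1,5}, N_{1,7}$ are pairwise relatively prime: $\gcd(N_{1,5},N_{1,7}) = \gcd(N_{1,3},N_{1,5}) = \gcd(N_{1,3},N_{1,7}) = 1$. *)

theory Defs
  imports Main
begin

end

theory Submission
  imports Defs
begin

lemma cm: "(y::int) = k*x + d \<Longrightarrow> coprime x y \<longleftrightarrow> coprime x d"
  by (simp add: coprime_iff_gcd_eq_1 gcd_add_mult)

theorem theorem4p2:
  fixes a b :: int
  assumes "a > b" and "b > 0" and "gcd a b = 1" and "a mod 2 \<noteq> b mod 2"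
  shows "gcd (a\<^sup>2 + b\<^sup>2) ((a + b)\<^sup>2 - 2 * b\<^sup>2) = 1
       \<and> gcd ((a - b)\<^sup>2 + 2 * b\<^sup>2) (a\<^sup>2 + b\<^sup>2) = 1
       \<and> gcd ((a - b)\<^sup>2 + 2 * b\<^sup>2) ((a + b)\<^sup>2 - 2 * b\<^sup>2) = 1"
proof -
  have cab: "coprime a b" using assms(3) by (simp add: coprime_iff_gcd_eq_1)
  have par: "odd a \<longleftrightarrow> even b" using assms(4) by (simp add: even_iff_mod_2_eq_zero odd_iff_mod_2_eq_one) presburger
  have oab: "odd (a - b)" using par by auto
  define N5 where "N5 = a\<^sup>2 + b\<^sup>2"
  define N7 where "N7 = (a + b)\<^sup>2 - 2 * b\<^sup>2"
  define N3 where "N3 = (a - b)\<^sup>2 + 2 * b\<^sup>2"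
  have o5: "odd N5" unfolding N5_def using par by auto
  have o7: "odd N7" unfolding N7_def using par by auto
  have o3: "odd N3" unfolding N3_def using par by auto
  have cabb: "coprime (a-b) b" using cm[of "a-b" "-1" b a] cab by (simp add: coprime_commute)
  have cab2: "coprime (a-b) (2*b^2)" using cabb oab by (simp add: coprime_commute)
  have cba2: "coprime b (a^2)" using cab by (simp add: coprime_commute)
  have c5b: "coprime N5 b"
    using cm[of N5 b b "a^2"] cba2 by (simp add: N5_def power2_eq_square coprime_commute)
  have c5ab: "coprime N5 (a-b)"
    using cm[of N5 "a+b" "a-b" "2*b^2"] cab2 by (simp add: N5_def power2_eq_square coprime_commute algebra_simps)
  have c3b: "coprime N3 b"
    using cm[of N3 "3*b-2*a" b "a^2"] cba2 by (simp add: N3_def power2_eq_square coprime_commute algebra_simps)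
  have c3ab: "coprime N3 (a-b)"
    using cm[of N3 "a-b" "a-b" "2*b^2"] cab2 by (simp add: N3_def power2_eq_square coprime_commute algebra_simps)
  have c52: "coprime N5 2" using o5 by (simp add: coprime_commute)
  have c32: "coprime N3 2" using o3 by (simp add: coprime_commute)
  have c34: "coprime N3 4" using c32 coprime_mult_right_iff[of N3 2 2] by simp
  have "coprime N5 (2*b*(a-b))" using c52 c5b c5ab by simp
  then have g1: "coprime N5 N7"
    using cm[of N7 "1" N5 "2*b*(a-b)"] by (simp add: N5_def N7_def power2_eq_square algebra_simps)
  have "coprime N5 (-(2*b*(a-b)))" using c52 c5b c5ab by simp
  then have g2: "coprime N3 N5"
    using cm[of N3 "1" N5 "-(2*b*(a-b))"] by (simp add: N5_def N3_def power2_eq_square algebra_simps coprime_commute)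
  have "coprime N3 (4*b*(a-b))" using c34 c3b c3ab by simp
  then have g3: "coprime N3 N7"
    using cm[of N7 "1" N3 "4*b*(a-b)"] by (simp add: N3_def N7_def power2_eq_square algebra_simps)
  show ?thesis using g1 g2 g3 by (simp add: N3_def N5_def N7_def coprime_iff_gcd_eq_1)
qed

end
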